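(* Let $d\ge1$ and $n\ge 3d+2$ be integers. If $G$ is an $n$-vertex graph with $d\le\delta(G)\le\Delta(G)\le n-2d-1$, then $G$ admits a matching of size $d+1$.
   Context: $G$ is a finite simple graph; $\delta(G)$ and $\Delta(G)$ denote its minimum and maximum degree. A matching is a set of pairwise vertex-disjoint edges; its size is the number of edges. *)

theory Defs
  imports Main
begin

definition simple_graph :: "'a set \<Rightarrow> 'a set set \<Rightarrow> bool" where
  "simple_graph V E \<longleftrightarrow> finite V \<and> (\<forall>e\<in>E. e \<subseteq> V \<and> card e = 2)"

definition degree :: "'a set set \<Rightarrow> 'a \<Rightarrow> nat" where
  "degree E v = card {e\<in>E. v \<in> e}"

definition min_degree :: "'a set \<Rightarrow> 'a set set \<Rightarrow> nat" where
  "min_degree V E = Min (degree E ` V)"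

definition max_degree :: "'a set \<Rightarrow> 'a set set \<Rightarrow> nat" where
  "max_degree V E = Max (degree E ` V)"

definition matching :: "'a set set \<Rightarrow> 'a set set \<Rightarrow> bool" where
  "matching E M \<longleftrightarrow> M \<subseteq> E \<and> (\<forall>e1\<in>M. \<forall>e2\<in>M. e1 \<noteq> e2 \<longrightarrow> e1 \<inter> e2 = {})"

end

theory Submission
  imports Defs
begin

lemma degree_card_nbrs:
  assumes sg: "simple_graph V E"
  shows "degree E v = card {s. {v,s} \<in> E}"
proof -
  have ne: "s \<noteq> v" if "{v,s} \<in> E" for s
  proof
    assume "s = v" then have "card {v,s} = 1" by simp
    with that sg show False unfolding simple_graph_def by auto
  qed
  have eq: "{e\<in>E. v \<in> e} = (\<lambda>s. {v,s}) ` {s. {v,s} \<in> E}"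
  proof
    show "{e\<in>E. v \<in> e} \<subseteq> (\<lambda>s. {v,s}) ` {s. {v,s} \<in> E}"
    proof
      fix e assume e: "e \<in> {e\<in>E. v \<in> e}"
      then have "card e = 2" using sg unfolding simple_graph_def by auto
      then obtain a b where ab: "e = {a,b}" "a \<noteq> b" by (auto simp: card_2_iff)
      with e have "e = {v, (if a = v then b else a)}" by auto
      with e show "e \<in> (\<lambda>s. {v,s}) ` {s. {v,s} \<in> E}" by auto
    qed
  qed auto
  have "inj_on (\<lambda>s. {v,s}) {s. {v,s} \<in> E}"
  proof (rule inj_onI)
    fix s t assume "s \<in> {s. {v,s} \<in> E}" "t \<in> {s. {v,s} \<in> E}" "{v,s} = {v,t}"
    with ne show "s = t" by (metis doubleton_eq_iff mem_Collect_eq)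
  qed
  then show ?thesis unfolding degree_def eq by (simp add: card_image)
qed

theorem lemma2p8:
  fixes V :: "'a set" and E :: "'a set set" and d n :: nat
  assumes "simple_graph V E"
    and "card V = n"
    and "d \<ge> 1"
    and "n \<ge> 3 * d + 2"
    and "d \<le> min_degree V E"
    and "max_degree V E \<le> n - 2 * d - 1"
  shows "\<exists>M. matching E M \<and> card M = d + 1"
proof -
  note sg = assms(1)
  have finV: "finite V" using sg unfolding simple_graph_def by auto
  have EV: "E \<subseteq> Pow V" using sg unfolding simple_graph_def by auto
  have finE: "finite E" using finV EV by (meson finite_Pow_iff finite_subset)
  have c2: "\<And>e. e \<in> E \<Longrightarrow> card e = 2" using sg unfolding simple_graph_def by auto
  have fine: "\<And>e. e \<in> E \<Longrightarrow> finite e" using c2 by (metis card.infinite zero_neq_numeral)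
  have Vne: "V \<noteq> {}" using assms(2,4) by auto
  have mind: "\<And>v. v \<in> V \<Longrightarrow> d \<le> degree E v"
    using assms(5) finV unfolding min_degree_def by (meson Min_le finite_imageI imageI order_trans)
  have maxd: "\<And>v. v \<in> V \<Longrightarrow> degree E v \<le> n - 2 * d - 1"
    using assms(6) finV unfolding max_degree_def by (meson Max_ge finite_imageI imageI order_trans)
  have edge_in: "\<And>a b. {a,b} \<in> E \<Longrightarrow> a \<in> V \<and> b \<in> V" using EV by auto
  have edge_ne: "\<And>a b. {a,b} \<in> E \<Longrightarrow> a \<noteq> b"
    using c2 by fastforce
  obtain M where M: "matching E M" and Mmax: "\<And>M'. matching E M' \<Longrightarrow> card M' \<le> card M"
  proof -
    have "matching E {}" unfolding matching_def by auto
    moreover have "\<forall>y. matching E y \<longrightarrow> card y < Suc (card E)"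
      using finE unfolding matching_def by (simp add: card_mono le_imp_less_Suc)
    ultimately show ?thesis using ex_has_greatest_nat[of "matching E" "{}" card "Suc (card E)"] that by blast
  qed
  have MsubE: "M \<subseteq> E" and Mdisj: "\<And>e1 e2. e1 \<in> M \<Longrightarrow> e2 \<in> M \<Longrightarrow> e1 \<noteq> e2 \<Longrightarrow> e1 \<inter> e2 = {}"
    using M unfolding matching_def by auto
  have finM: "finite M" using MsubE finE finite_subset by blast
  show ?thesis
  proof (cases "d + 1 \<le> card M")
    case True
    then obtain T where "T \<subseteq> M" "card T = d + 1" by (meson obtain_subset_with_card_n)
    then have "matching E T" using M unfolding matching_def by blast
    then show ?thesis using \<open>card T = d + 1\<close> by blast
  next
    case False
    define k where "k = card M"
    have kd: "k \<le> d" using False k_def by simp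
    define S where "S = \<Union>M"
    define U where "U = V - S"
    have SV: "S \<subseteq> V" using MsubE EV S_def by auto
    have finS: "finite S" using SV finV finite_subset by blast
    have finU: "finite U" using finV U_def by simp
    have cardS: "card S \<le> 2 * k"
    proof -
      have "card S \<le> sum card M" unfolding S_def by (rule card_Union_le_sum_card)
      also have "\<dots> = sum (\<lambda>_. 2) M" using MsubE c2 by (intro sum.cong) auto
      finally show ?thesis using k_def by simp
    qed
    have cardU: "card U \<ge> n - 2 * d"
    proof -
      have "card U = card V - card S" unfolding U_def using SV finS by (simp add: card_Diff_subset)
      then show ?thesis using cardS kd assms(2) by linarith
    qed
    have noU: "\<And>a b. {a,b} \<in> E \<Longrightarrow> a \<in> U \<Longrightarrow> b \<in> U \<Longrightarrow> False"
    proof -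
      fix a b assume ab: "{a,b} \<in> E" "a \<in> U" "b \<in> U"
      have nin: "{a,b} \<notin> M" using ab(2) U_def S_def by auto
      have "matching E (insert {a,b} M)"
        using M ab unfolding matching_def U_def S_def by blast
      then have "card (insert {a,b} M) \<le> card M" by (rule Mmax)
      then show False using nin finM by simp
    qed
    (* augmentation *)
    have aug: "\<And>e x y u u'. e \<in> M \<Longrightarrow> e = {x,y} \<Longrightarrow> x \<noteq> y \<Longrightarrow> u \<in> U \<Longrightarrow> u' \<in> U
       \<Longrightarrow> {x,u} \<in> E \<Longrightarrow> {y,u'} \<in> E \<Longrightarrow> u = u'"
    proof (rule ccontr)
      fix e x y u u' assume h: "e \<in> M" "e = {x,y}" "x \<noteq> y" "u \<in> U" "u' \<in> U"
        "{x,u} \<in> E" "{y,u'} \<in> E" "u \<noteq> u'"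
      have uS: "u \<notin> S" "u' \<notin> S" using h U_def by auto
      have xS: "x \<in> S" "y \<in> S" using h S_def by auto
      define M' where "M' = insert {x,u} (insert {y,u'} (M - {e}))"
      have n1a: "{x,u} \<notin> M" using uS S_def by blast
      have n1b: "{x,u} \<noteq> {y,u'}" using h(3) h(4) xS uS by (metis doubleton_eq_iff)
      have n1: "{x,u} \<notin> insert {y,u'} (M - {e})" using n1a n1b by blast
      have n2: "{y,u'} \<notin> M - {e}" using uS S_def by auto
      have cM': "card M' = card M + 1"
        unfolding M'_def using n1 n2 finM h(1)
        by (simp add: card_insert_if) (metis One_nat_def Suc_pred card_gt_0_iff empty_iff)
      have "matching E M'"
        unfolding matching_def M'_def
      proof (intro conjI)
        show "insert {x,u} (insert {y,u'} (M - {e})) \<subseteq> E" using h MsubE by auto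
        have A: "\<And>e'. e' \<in> M - {e} \<Longrightarrow> {x,u} \<inter> e' = {} \<and> {y,u'} \<inter> e' = {}"
        proof -
          fix e' assume e': "e' \<in> M - {e}"
          then have "e \<inter> e' = {}" using Mdisj h(1) by blast
          moreover have "u \<notin> e'" "u' \<notin> e'" using e' uS S_def by auto
          ultimately show "{x,u} \<inter> e' = {} \<and> {y,u'} \<inter> e' = {}" using h(2) by auto
        qed
        have B: "{x,u} \<inter> {y,u'} = {}" using h uS xS by auto
        show "\<forall>e1\<in>insert {x, u} (insert {y, u'} (M - {e})).
              \<forall>e2\<in>insert {x, u} (insert {y, u'} (M - {e})). e1 \<noteq> e2 \<longrightarrow> e1 \<inter> e2 = {}"
          using A B Mdisj by (auto simp del: Int_insert_left Int_insert_right)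
      qed
      then have "card M' \<le> card M" by (rule Mmax)
      then show False using cM' by simp
    qed
    define g where "g s = card {u\<in>U. {u,s} \<in> E}" for s
    have low: "d * card U \<le> (\<Sum>u\<in>U. card {s\<in>S. {u,s} \<in> E})"
    proof -
      have "(\<Sum>u\<in>U. d) \<le> (\<Sum>u\<in>U. card {s\<in>S. {u,s} \<in> E})"
      proof (rule sum_mono)
        fix u assume u: "u \<in> U"
        have "{s\<in>S. {u,s} \<in> E} = {s. {u,s} \<in> E}"
        proof -
          have "s \<in> S" if "{u,s} \<in> E" for s
            using that edge_in noU u U_def by blast
          then show ?thesis by auto
        qed
        then show "d \<le> card {s\<in>S. {u,s} \<in> E}"
          using mind[of u] u U_def degree_card_nbrs[OF sg, of u] by simp
      qed
      then show ?thesis by (simp add: mult.commute)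
    qed
    have swap: "(\<Sum>u\<in>U. card {s\<in>S. {u,s} \<in> E}) = (\<Sum>s\<in>S. g s)"
      using sum.swap_restrict[OF finU finS, of "\<lambda>_ _. 1::nat" "\<lambda>u s. {u,s} \<in> E"]
      unfolding g_def by simp
    have split: "(\<Sum>s\<in>S. g s) = (\<Sum>e\<in>M. \<Sum>s\<in>e. g s)"
      unfolding S_def using sum.Union_disjoint[of M g] MsubE fine Mdisj by auto
    have gbound: "\<And>x y. {x,y} \<in> M \<Longrightarrow> g y \<le> n - 2 * d - 2"
    proof -
      fix x y assume xy: "{x,y} \<in> M"
      have xyE: "{y,x} \<in> E" using xy MsubE by (auto simp: insert_commute)
      have "{u\<in>U. {u,y} \<in> E} \<subseteq> {s. {y,s} \<in> E} - {x}"
        using xy U_def S_def by (auto simp: insert_commute)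
      moreover have "x \<in> {s. {y,s} \<in> E}" using xyE by simp
      moreover have "finite {s. {y,s} \<in> E}"
        using edge_in finV by (metis (no_types, lifting) finite_subset mem_Collect_eq subsetI)
      ultimately have "g y \<le> card {s. {y,s} \<in> E} - 1"
        unfolding g_def
      proof -
        assume a: "{u \<in> U. {u, y} \<in> E} \<subseteq> {s. {y, s} \<in> E} - {x}" "x \<in> {s. {y, s} \<in> E}"
          "finite {s. {y, s} \<in> E}"
        have "card {u \<in> U. {u, y} \<in> E} \<le> card ({s. {y, s} \<in> E} - {x})"
          using a by (intro card_mono) auto
        also have "\<dots> = card {s. {y, s} \<in> E} - 1" using a by (simp add: card_Diff_singleton)
        finally show "card {u \<in> U. {u, y} \<in> E} \<le> card {s. {y, s} \<in> E} - 1" .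
      qed
      moreover have "card {s. {y,s} \<in> E} \<le> n - 2 * d - 1"
        using maxd[of y] degree_card_nbrs[OF sg, of y] edge_in xyE by simp
      ultimately show "g y \<le> n - 2 * d - 2" by simp
    qed
    have gone: "\<And>x y. {x,y} \<in> M \<Longrightarrow> x \<noteq> y \<Longrightarrow> g y \<noteq> 0 \<Longrightarrow> g x \<le> 1"
    proof -
      fix x y assume h: "{x,y} \<in> M" "x \<noteq> y" "g y \<noteq> 0"
      then obtain u' where u': "u' \<in> U" "{u',y} \<in> E" unfolding g_def
        by (metis (no_types, lifting) card.empty empty_Collect_eq)
      have "{u\<in>U. {u,x} \<in> E} \<subseteq> {u'}"
        using aug[OF h(1) refl h(2)] u' by (auto simp: insert_commute)
      then show "g x \<le> 1" unfolding g_def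
        by (metis card.empty card.insert card_mono empty_iff finite.emptyI finite.insertI One_nat_def)
    qed
    have per: "\<And>e. e \<in> M \<Longrightarrow> (\<Sum>s\<in>e. g s) \<le> n - 2 * d - 1"
    proof -
      fix e assume e: "e \<in> M"
      then obtain x y where xy: "e = {x,y}" "x \<noteq> y" using c2 MsubE by (meson card_2_iff subsetD)
      have s: "(\<Sum>s\<in>e. g s) = g x + g y" using xy by simp
      have b1: "g y \<le> n - 2 * d - 2" using gbound e xy by simp
      have b2: "g x \<le> n - 2 * d - 2" using gbound[of y x] e xy by (simp add: insert_commute)
      have big: "n - 2 * d - 1 \<ge> 2" using assms(3,4) by linarith
      show "(\<Sum>s\<in>e. g s) \<le> n - 2 * d - 1"
      proof (cases "g x = 0 \<or> g y = 0")
        case True then show ?thesis using s b1 b2 by auto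
      next
        case False
        then have "g x \<le> 1" "g y \<le> 1"
          using gone[of x y] gone[of y x] e xy by (auto simp: insert_commute)
        then show ?thesis using s big by simp
      qed
    qed
    have "(\<Sum>e\<in>M. \<Sum>s\<in>e. g s) \<le> (\<Sum>e\<in>M. n - 2 * d - 1)" using per by (rule sum_mono)
    then have up: "(\<Sum>e\<in>M. \<Sum>s\<in>e. g s) \<le> k * (n - 2 * d - 1)" using k_def by simp
    have "k * (n - 2 * d - 1) \<le> d * (n - 2 * d - 1)" using kd by simp
    moreover have "d * (n - 2 * d - 1) < d * (n - 2 * d)" using assms(3,4) by simp
    moreover have "d * (n - 2 * d) \<le> d * card U" using cardU by simp
    ultimately show ?thesis using low swap split up by linarith
  qed
qed

end
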